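(* Let $k$ be a field of characteristic $0$, $n\geq3$, let $\phi'$ be a regular quadratic form over $k$ in $n-2$ variables, $\phi=\langle1\rangle\perp(-\phi')$, and let $X\subset\mathbb A^n_k$ be the zero locus of $x_1x_2-\phi(1,x_3,\dots,x_n)$. Let $(R,m,\kappa)$ be a discrete valuation ring containing $k$, with fraction field $K$ and valuation $v$. Let $h\in X(K)$ with $h_i=h^*(x_i)$, and suppose $\phi_\kappa$ is anisotropic. (1) If $h$ lifts to $X({\rm Spec}\,R)$, then $v(h_1)=v(h_2)=0$. (2) If $h$ does not lift to $X({\rm Spec}\,R)$, then $v(h_1)<0$ or $v(h_2)<0$, and $\min\{v(h_1),v(h_2)\}=\min\{v(h_1),v(h_2),\dots,v(h_n)\}$.
   Context: $\phi_\kappa$ is the base change of $\phi$ to the residue field $\kappa$; $\langle 1\rangle$ is the form $x^2$ and $\perp$ the orthogonal sum. *)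

theory Defs
  imports "HOL-Library.Extended_Real"
begin

definition subfield :: "'a::field set \<Rightarrow> bool" where
  "subfield k \<longleftrightarrow> 0 \<in> k \<and> 1 \<in> k \<and>
     (\<forall>x\<in>k. \<forall>y\<in>k. x + y \<in> k \<and> x * y \<in> k \<and> - x \<in> k) \<and>
     (\<forall>x\<in>k. x \<noteq> 0 \<longrightarrow> inverse x \<in> k)"

text \<open>Its valuation ring
  R = {x. v x \<ge> 0} is a discrete valuation ring with fraction field K.\<close>
definition discrete_valuation :: "('a::field \<Rightarrow> ereal) \<Rightarrow> bool" where
  "discrete_valuation v \<longleftrightarrow>
     v 0 = \<infinity> \<and>
     (\<forall>x. x \<noteq> 0 \<longrightarrow> (\<exists>z::int. v x = ereal (of_int z))) \<and>
     (\<forall>x y. v (x * y) = v x + v y) \<and>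
     (\<forall>x y. min (v x) (v y) \<le> v (x + y)) \<and>
     (\<exists>t. v t = 1)"

definition qform :: "(nat \<Rightarrow> nat \<Rightarrow> 'a::comm_ring_1) \<Rightarrow> nat \<Rightarrow> (nat \<Rightarrow> 'a) \<Rightarrow> 'a" where
  "qform a n x = (\<Sum>i\<in>{3..n}. \<Sum>j\<in>{3..n}. a i j * x i * x j)"

text \<open>phi = <1> \<perp> (-phi'), in the variables x_1, x_3, ..., x_n.\<close>
definition phi :: "(nat \<Rightarrow> nat \<Rightarrow> 'a::comm_ring_1) \<Rightarrow> nat \<Rightarrow> (nat \<Rightarrow> 'a) \<Rightarrow> 'a" where
  "phi a n x = x 1 ^ 2 - qform a n x"

definition regular_qform :: "'a::field set \<Rightarrow> (nat \<Rightarrow> nat \<Rightarrow> 'a) \<Rightarrow> nat \<Rightarrow> bool" where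
  "regular_qform k a n \<longleftrightarrow>
     (\<forall>i\<in>{3..n}. \<forall>j\<in>{3..n}. a i j \<in> k \<and> a i j = a j i) \<and>
     (\<forall>x. (\<forall>i\<in>{3..n}. x i \<in> k) \<longrightarrow>
          (\<forall>j\<in>{3..n}. (\<Sum>i\<in>{3..n}. a i j * x i) = 0) \<longrightarrow>
          (\<forall>i\<in>{3..n}. x i = 0))"

text \<open>The base change of phi to the residue field kappa = R/m is anisotropic:
  unfolded, a nonzero vector over kappa is the reduction of a vector y over R
  with some coordinate a unit, and phi_kappa(y mod m) = 0 iff phi(y) \<in> m.\<close>
definition residually_anisotropic :: "('a::field \<Rightarrow> ereal) \<Rightarrow> (nat \<Rightarrow> nat \<Rightarrow> 'a) \<Rightarrow> nat \<Rightarrow> bool" where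
  "residually_anisotropic v a n \<longleftrightarrow>
     (\<forall>y. (\<forall>i\<in>insert 1 {3..n}. 0 \<le> v (y i)) \<longrightarrow>
          (\<exists>i\<in>insert 1 {3..n}. v (y i) = 0) \<longrightarrow>
          v (phi a n y) = 0)"

end

theory Submission
  imports Defs
begin

lemma phi_scale:
  fixes a :: "nat \<Rightarrow> nat \<Rightarrow> 'a::comm_ring_1"
  shows "phi a n (\<lambda>i. c * y i) = c^2 * phi a n y"
  unfolding phi_def qform_def
  by (simp add: sum_distrib_left power2_eq_square algebra_simps)

lemma dv_basic:
  assumes "discrete_valuation v"
  shows "v 1 = 0" "\<And>x. v x \<noteq> -\<infinity>" "\<And>x y. v (x*y) = v x + v y"
    "\<And>x. x \<noteq> 0 \<Longrightarrow> \<exists>z::int. v x = ereal (of_int z)"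
proof -
  have fin: "\<And>x. x \<noteq> 0 \<Longrightarrow> \<exists>z::int. v x = ereal (of_int z)"
    using assms unfolding discrete_valuation_def by blast
  show "\<And>x. x \<noteq> 0 \<Longrightarrow> \<exists>z::int. v x = ereal (of_int z)" by (rule fin)
  show mul: "\<And>x y. v (x*y) = v x + v y" using assms unfolding discrete_valuation_def by blast
  obtain z :: int where z: "v 1 = ereal (of_int z)" using fin[of 1] by auto
  have "v 1 = v 1 + v 1" using mul[of 1 1] by simp
  then show "v 1 = 0" using z by simp
  show "\<And>x. v x \<noteq> -\<infinity>"
  proof -
    fix x show "v x \<noteq> -\<infinity>"
      using fin[of x] assms unfolding discrete_valuation_def by (cases "x = 0") auto
  qed
qed

lemma dv_pow:
  assumes "discrete_valuation v" "v t = 1"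
  shows "v (t ^ m) = ereal (of_nat m)"
proof (induction m)
  case 0 then show ?case using dv_basic(1)[OF assms(1)] by simp
next
  case (Suc m)
  have "v (t ^ Suc m) = v t + v (t^m)" using dv_basic(3)[OF assms(1)] by simp
  then show ?case using Suc assms(2) by simp
qed

theorem lemma4p7:
  fixes k :: "'a::field_char_0 set"
    and v :: "'a \<Rightarrow> ereal"
    and a :: "nat \<Rightarrow> nat \<Rightarrow> 'a"
    and n :: nat
    and h :: "nat \<Rightarrow> 'a"
  assumes "subfield k"
    and "n \<ge> 3"
    and "regular_qform k a n"
    and "discrete_valuation v"
    and "\<forall>c\<in>k. 0 \<le> v c"
    and "h 1 * h 2 = phi a n (h(1 := 1))"
    and "residually_anisotropic v a n"
  shows "((\<forall>i\<in>{1..n}. 0 \<le> v (h i)) \<longrightarrow> v (h 1) = 0 \<and> v (h 2) = 0) \<and>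
         (\<not> (\<forall>i\<in>{1..n}. 0 \<le> v (h i)) \<longrightarrow>
            (v (h 1) < 0 \<or> v (h 2) < 0) \<and>
            min (v (h 1)) (v (h 2)) = Min (v ` h ` {1..n}))"
proof -
  note dv = assms(4)
  note v1 = dv_basic(1)[OF dv] and vninf = dv_basic(2)[OF dv]
    and vmul = dv_basic(3)[OF dv] and vfin = dv_basic(4)[OF dv]
  obtain t where vt: "v t = 1" using dv unfolding discrete_valuation_def by blast
  define y where "y = h(1 := 1)"
  define T where "T = insert (1::nat) {3..n}"
  have Tfin: "finite T" unfolding T_def by simp
  define M where "M = Min (v ` y ` T)"
  have "M \<in> v ` y ` T" unfolding M_def using Tfin by (intro Min_in) (auto simp: T_def)
  then obtain j where jT: "j \<in> T" and Mj: "M = v (y j)" by auto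
  have Mle: "\<And>i. i \<in> T \<Longrightarrow> M \<le> v (y i)" unfolding M_def using Tfin by (intro Min_le) auto
  have "M \<le> 0" using Mle[of 1] v1 by (simp add: T_def y_def)
  have "y j \<noteq> 0" proof
    assume "y j = 0" then have "M = \<infinity>" using Mj dv unfolding discrete_valuation_def by simp
    with \<open>M \<le> 0\<close> show False by simp
  qed
  then obtain z :: int where z: "M = ereal (of_int z)" using vfin Mj by blast
  have z0: "z \<le> 0" using \<open>M \<le> 0\<close> z by simp
  define c where "c = t ^ nat (- z)"
  have vc: "v c = ereal (of_int (- z))" unfolding c_def using dv_pow[OF dv vt] z0 by simp
  define y' where "y' = (\<lambda>i. c * y i)"
  have "v (phi a n y') = 0"
    using assms(7) unfolding residually_anisotropic_def
  proof (elim allE impE)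
    show "\<forall>i\<in>insert 1 {3..n}. 0 \<le> v (y' i)"
    proof
      fix i assume "i \<in> insert 1 {3..n}"
      then have "ereal (of_int z) \<le> v (y i)" using Mle z T_def by auto
      then show "0 \<le> v (y' i)" unfolding y'_def vmul vc using vninf[of "y i"]
        by (cases "v (y i)") auto
    qed
    show "\<exists>i\<in>insert 1 {3..n}. v (y' i) = 0"
    proof (intro bexI[of _ j])
      show "v (y' j) = 0" unfolding y'_def vmul vc proof -
        have "v (y j) = ereal (of_int z)" using Mj z by simp
        then show "ereal (of_int (- z)) + v (y j) = 0" by simp
      qed
    qed (use jT T_def in auto)
  qed
  moreover have "phi a n y' = c^2 * phi a n y" unfolding y'_def by (rule phi_scale)
  ultimately have "0 = v (c*c) + v (phi a n y)" by (simp add: vmul power2_eq_square)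
  then have "0 = ereal (of_int (-2*z)) + v (phi a n y)" by (simp add: vmul vc)
  then have vphi: "v (phi a n y) = ereal (of_int (2*z))"
    using vninf[of "phi a n y"] by (cases "v (phi a n y)") auto
  have sum12: "v (h 1) + v (h 2) = ereal (of_int (2*z))"
    using vphi assms(6) vmul y_def by metis
  obtain p where p: "v (h 1) = ereal p"
    using sum12 vninf[of "h 1"] by (cases "v (h 1)"; cases "v (h 2)") auto
  obtain q where q: "v (h 2) = ereal q"
    using sum12 vninf[of "h 2"] p by (cases "v (h 2)") auto
  have pq: "p + q = 2 * of_int z" using sum12 p q by simp
  have geS: "\<And>i. i \<in> {3..n} \<Longrightarrow> ereal (of_int z) \<le> v (h i)"
  proof -
    fix i assume i: "i \<in> {3..n}"
    then have "M \<le> v (y i)" using Mle T_def by auto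
    moreover have "y i = h i" using i y_def by auto
    ultimately show "ereal (of_int z) \<le> v (h i)" using z by simp
  qed
  show ?thesis
  proof (intro conjI impI)
    assume all: "\<forall>i\<in>{1..n}. 0 \<le> v (h i)"
    have "0 \<le> v (h 1)" "0 \<le> v (h 2)" using all assms(2) by auto
    then have "0 \<le> p" "0 \<le> q" using p q by auto
    then have "p = 0" "q = 0" using pq z0 by linarith+
    then show "v (h 1) = 0" "v (h 2) = 0" using p q by (simp_all add: zero_ereal_def)
  next
    assume nall: "\<not> (\<forall>i\<in>{1..n}. 0 \<le> v (h i))"
    then obtain i where i: "i \<in> {1..n}" "v (h i) < 0" by force
    have "min p q < 0 \<and> min p q \<le> of_int z"
    proof (cases "z < 0")
      case True then show ?thesis using pq by linarith
    next
      case False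
      then have "z = 0" using z0 by simp
      have "i = 1 \<or> i = 2"
      proof (rule ccontr)
        assume "\<not> (i = 1 \<or> i = 2)" then have "i \<in> {3..n}" using i by auto
        then have "ereal (of_int z) \<le> v (h i)" by (rule geS)
        then show False using i(2) \<open>z = 0\<close> by (simp add: zero_ereal_def)
      qed
      then have "p < 0 \<or> q < 0" using i p q by (auto simp: zero_ereal_def)
      then show ?thesis using \<open>z = 0\<close> pq by linarith
    qed
    then have mn: "min p q < 0" "min p q \<le> of_int z" by auto
    show "v (h 1) < 0 \<or> v (h 2) < 0" using mn p q by (auto simp: zero_ereal_def min_def split: if_splits)
    show "min (v (h 1)) (v (h 2)) = Min (v ` h ` {1..n})"
    proof (rule Min_eqI[symmetric])
      show "finite (v ` h ` {1..n})" by simp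
      show "min (v (h 1)) (v (h 2)) \<in> v ` h ` {1..n}" using assms(2) by (auto simp: min_def)
      fix w assume "w \<in> v ` h ` {1..n}"
      then obtain l where l: "l \<in> {1..n}" "w = v (h l)" by auto
      show "min (v (h 1)) (v (h 2)) \<le> w"
      proof (cases "l = 1 \<or> l = 2")
        case True then show ?thesis using l by auto
      next
        case False
        then have "l \<in> {3..n}" using l by auto
        then have "ereal (of_int z) \<le> w" using geS l by simp
        moreover have "min (v (h 1)) (v (h 2)) \<le> ereal (of_int z)"
          using mn p q by (simp add: min_def split: if_splits)
        ultimately show ?thesis by order
      qed
    qed
  qed
qed

end
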